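(* Let $(X_m)_{m\in\mathbb Z}$ be a homogeneous second order recurrence sequence with constant coefficients. For integers $a,b,c,d,e$ put $$\Delta=X_{d-a}X_{e-b}-X_{e-a}X_{d-b},\quad \Delta_1=X_{d-c}X_{e-b}-X_{e-c}X_{d-b},\quad \Delta_2=X_{d-a}X_{e-c}-X_{e-a}X_{d-c}.$$ Let $k,m$ be integers. Provided every denominator appearing below is nonzero and, when $k<0$, the base of every power $(\cdot)^r$ or $(\cdot)^k$ appearing is nonzero, the following hold: $$\sum_{r=0}^k\left(\frac{\Delta}{\Delta_1}\right)^rX_{m-k(a-c)-b+c+(a-c)r}=\frac{\Delta}{\Delta_2}\left(\frac{\Delta}{\Delta_1}\right)^kX_m-\frac{\Delta_1}{\Delta_2}X_{m-(k+1)(a-c)},$$ $$\sum_{r=0}^k\left(\frac{\Delta}{\Delta_2}\right)^rX_{m-k(b-c)-a+c+(b-c)r}=\frac{\Delta}{\Delta_1}\left(\frac{\Delta}{\Delta_2}\right)^kX_m-\frac{\Delta_2}{\Delta_1}X_{m-(k+1)(b-c)},$$ $$\sum_{r=0}^k\left(\frac{-\Delta_2}{\Delta_1}\right)^rX_{m-k(a-b)+b-c+(a-b)r}=\frac{\Delta_2}{\Delta}\left(\frac{-\Delta_2}{\Delta_1}\right)^kX_m+\frac{\Delta_1}{\Delta}X_{m-(k+1)(a-b)}.$$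
   Context: A homogeneous second order recurrence sequence with constant coefficients is a sequence $(X_m)_{m\in\mathbb Z}$ of complex numbers for which there are constants $p,q\in\mathbb C$, $q\neq 0$, with $X_m=pX_{m-1}+qX_{m-2}$ for all $m\in\mathbb Z$. Summation convention: for an integer $k<0$, $\sum_{r=0}^k f_r$ means $-\sum_{r=k+1}^{-1} f_r$ (in particular it equals $0$ when $k=-1$). *)

theory Defs
  imports Complex_Main
begin

definition second_order_rec :: "(int \<Rightarrow> complex) \<Rightarrow> bool" where
  "second_order_rec X \<longleftrightarrow>
     (\<exists>p q. q \<noteq> 0 \<and> (\<forall>m. X m = p * X (m - 1) + q * X (m - 2)))"

definition gsum :: "int \<Rightarrow> (int \<Rightarrow> complex) \<Rightarrow> complex" where
  "gsum k f = (if 0 \<le> k then (\<Sum>r = 0..k. f r) else - (\<Sum>r = k + 1..-1. f r))"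

end

theory Submission imports Defs begin

lemma rec_zero:
  fixes Y :: "int \<Rightarrow> complex"
  assumes q: "q \<noteq> 0" and r: "\<And>n. Y n = p * Y (n - 1) + q * Y (n - 2)"
    and z0: "Y s = 0" and z1: "Y (s + 1) = 0"
  shows "Y n = 0"
proof -
  have fw: "Y (s + int k) = 0 \<and> Y (s + int k + 1) = 0" for k :: nat
  proof (induction k)
    case 0 then show ?case using z0 z1 by simp
  next
    case (Suc k)
    have "Y (s + int k + 2) = p * Y (s + int k + 1) + q * Y (s + int k)"
      using r[of "s + int k + 2"] by (simp add: algebra_simps)
    with Suc show ?case by (simp add: algebra_simps)
  qed
  have bw: "Y (s - int k) = 0 \<and> Y (s - int k + 1) = 0" for k :: nat
  proof (induction k)
    case 0 then show ?case using z0 z1 by simp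
  next
    case (Suc k)
    have "Y (s - int k + 1) = p * Y (s - int k) + q * Y (s - int k - 1)"
      using r[of "s - int k + 1"] by (simp add: algebra_simps)
    with Suc q have "Y (s - int k - 1) = 0" by (metis add_cancel_right_left mult_eq_0_iff)
    with Suc show ?case by (simp add: algebra_simps)
  qed
  show ?thesis
  proof (cases "n \<ge> s")
    case True
    then have "n = s + int (nat (n - s))" by simp
    then show ?thesis using fw[of "nat (n - s)"] by metis
  next
    case False
    then have "n = s - int (nat (s - n))" by simp
    then show ?thesis using bw[of "nat (s - n)"] by metis
  qed
qed

definition D3 :: "(int \<Rightarrow> complex) \<Rightarrow> int \<Rightarrow> int \<Rightarrow> int \<Rightarrow> int \<Rightarrow> int \<Rightarrow> int \<Rightarrow> complex" where
  "D3 X a b c i j n = X(i-a)*(X(j-b)*X(n-c) - X(j-c)*X(n-b)) - X(i-b)*(X(j-a)*X(n-c)-X(j-c)*X(n-a))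
     + X(i-c)*(X(j-a)*X(n-b) - X(j-b)*X(n-a))"

lemma D3_rec_n:
  assumes r: "\<And>n. X n = p * X (n - 1) + q * X (n - 2)"
  shows "D3 X a b c i j n = p * D3 X a b c i j (n - 1) + q * D3 X a b c i j (n - 2)"
proof -
  have ra: "X (n-a) = p * X (n-1-a) + q * X (n-2-a)" using r[of "n-a"] by (simp add: algebra_simps)
  have rb: "X (n-b) = p * X (n-1-b) + q * X (n-2-b)" using r[of "n-b"] by (simp add: algebra_simps)
  have rc: "X (n-c) = p * X (n-1-c) + q * X (n-2-c)" using r[of "n-c"] by (simp add: algebra_simps)
  show ?thesis unfolding D3_def ra rb rc by (simp add: algebra_simps)
qed

lemma D3_rec_i:
  assumes r: "\<And>n. X n = p * X (n - 1) + q * X (n - 2)"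
  shows "D3 X a b c i j n = p * D3 X a b c (i - 1) j n + q * D3 X a b c (i - 2) j n"
proof -
  have ra: "X (i-a) = p * X (i-1-a) + q * X (i-2-a)" using r[of "i-a"] by (simp add: algebra_simps)
  have rb: "X (i-b) = p * X (i-1-b) + q * X (i-2-b)" using r[of "i-b"] by (simp add: algebra_simps)
  have rc: "X (i-c) = p * X (i-1-c) + q * X (i-2-c)" using r[of "i-c"] by (simp add: algebra_simps)
  show ?thesis unfolding D3_def ra rb rc by (simp add: algebra_simps)
qed

lemma D3_zero:
  assumes q: "q \<noteq> 0" and r: "\<And>n. X n = p * X (n - 1) + q * X (n - 2)"
  shows "D3 X a b c i j n = 0"
proof -
  have st1: "D3 X a b c s (s+1) n = 0" for s n
    by (rule rec_zero[OF q D3_rec_n[OF r], of _ _ _ _ _ s]) (simp_all add: D3_def algebra_simps)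
  show ?thesis
    by (rule rec_zero[where Y="\<lambda>i. D3 X a b c i j n", OF q D3_rec_i[OF r], of "j-1"])
      (use st1[of "j-1" n] in \<open>simp_all add: D3_def algebra_simps\<close>)
qed

lemma det_expand: "A1*(B2*C3 - C2*B3) - B1*(A2*C3 - C2*A3) + C1*(A2*B3 - B2*A3) = (A1*B2 - A2*B1)*C3 - (A1*C2 - A2*C1)*B3 - (C1*B2 - C2*B1)*A3" for A1::complex
  by algebra

lemma fld0: "D1 / D2 * (T * t) * A - D1 / D2 * T * B = D1 / D2 * (T * t * A - T * (B::complex))"
  by (simp add: algebra_simps)

lemma fld1: "t = D / D1 \<Longrightarrow> D1 \<noteq> 0 \<Longrightarrow> D2 \<noteq> 0 \<Longrightarrow> D1 / D2 * (T * t * A - T * B) = T * (D * A - D1 * B) / (D2::complex)"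
  by (simp add: field_simps)

lemma fld2: "D1 \<noteq> 0 \<Longrightarrow> D1 / D2 * (T * (D / D1)) * A = D / D2 * T * (A::complex)"
  by (simp add: field_simps)

lemma sum_tel_int:
  fixes h :: "int \<Rightarrow> complex"
  shows "(\<Sum>r = a..a + int n - 1. h (r + 1) - h r) = h (a + int n) - h a"
proof (induction n)
  case 0 then show ?case by simp
next
  case (Suc n)
  have "{a..a + int (Suc n) - 1} = insert (a + int n) {a..a + int n - 1}" by auto
  then show ?case using Suc by (simp add: algebra_simps)
qed

lemma gsum_tel:
  assumes H: "\<And>r. (0 \<le> k \<and> 0 \<le> r \<and> r \<le> k) \<or> (k < 0 \<and> k + 1 \<le> r \<and> r \<le> -1) \<Longrightarrow> g r = h (r + 1) - h r"
  shows "gsum k g = h (k + 1) - h 0"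
proof (cases "0 \<le> k")
  case True
  have S: "(\<Sum>r = 0..k. g r) = (\<Sum>r = 0..k. h (r + 1) - h r)"
  proof (rule sum.cong)
    fix r assume "r \<in> {0..k}"
    then show "g r = h (r + 1) - h r" using True by (intro H) auto
  qed simp
  have "gsum k g = (\<Sum>r = 0..k. g r)" unfolding gsum_def using True by simp
  also note S
  also have "(\<Sum>r = 0..k. h (r + 1) - h r) = h (0 + int (nat (k+1))) - h 0"
    using sum_tel_int[of h 0 "nat (k+1)"] True by simp
  finally show ?thesis using True by simp
next
  case False
  have S: "(\<Sum>r = k+1..-1. g r) = (\<Sum>r = k+1..-1. h (r + 1) - h r)"
  proof (rule sum.cong)
    fix r assume "r \<in> {k+1..-1}"
    then show "g r = h (r + 1) - h r" using False by (intro H) auto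
  qed simp
  have "gsum k g = - (\<Sum>r = k+1..-1. g r)" unfolding gsum_def using False by simp
  also note S
  also have "(\<Sum>r = k+1..-1. h (r + 1) - h r) = h ((k+1) + int (nat (-k-1))) - h (k+1)"
    using sum_tel_int[of h "k+1" "nat (-k-1)"] False by simp
  finally show ?thesis using False by simp
qed

lemma tel_main:
  fixes X :: "int \<Rightarrow> complex"
  assumes rel: "\<And>n. D * X (n - c) = D1 * X (n - a) + D2 * X (n - b)"
    and nz: "D1 \<noteq> 0" "D2 \<noteq> 0" "k < 0 \<longrightarrow> D \<noteq> 0"
  shows "gsum k (\<lambda>r. (D / D1) powi r * X (m - k * (a - c) - b + c + (a - c) * r))
      = D / D2 * (D / D1) powi k * X m - D1 / D2 * X (m - (k + 1) * (a - c))"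
proof -
  define t where "t = D / D1"
  define h where "h r = D1 / D2 * t powi r * X (m - k * (a - c) + (a - c) * r - (a - c))" for r
  have step: "t powi r * X (m - k * (a - c) - b + c + (a - c) * r) = h (r + 1) - h r"
    if "t \<noteq> 0 \<or> r \<noteq> -1" for r
  proof -
    define N where "N = m - k * (a - c) + (a - c) * r"
    have e1: "m - k * (a - c) - b + c + (a - c) * r = (N + c) - b" unfolding N_def by simp
    have e2: "m - k * (a - c) + (a - c) * (r + 1) - (a - c) = N" unfolding N_def by (simp add: algebra_simps)
    have e3: "m - k * (a - c) + (a - c) * r - (a - c) = (N + c) - a" unfolding N_def by simp
    have R: "D * X N = D1 * X (N + c - a) + D2 * X (N + c - b)" using rel[of "N + c"] by simp
    have P: "t powi (r + 1) = t powi r * t" using that by (intro power_int_add_1) auto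
    have R': "D * X N - D1 * X (N + c - a) = D2 * X (N + c - b)" using R by simp
    have "h (r + 1) - h r = D1 / D2 * (t powi r * t * X N - t powi r * X (N + c - a))"
      unfolding h_def e2 e3 P by (rule fld0)
    also have "\<dots> = t powi r * (D * X N - D1 * X (N + c - a)) / D2"
      by (rule fld1[OF t_def nz(1) nz(2)])
    also have "\<dots> = t powi r * X (N + c - b)" unfolding R' using nz(2) by simp
    finally show ?thesis unfolding e1 by simp
  qed
  have "gsum k (\<lambda>r. t powi r * X (m - k * (a - c) - b + c + (a - c) * r)) = h (k + 1) - h 0"
    by (rule gsum_tel, rule step) (use nz in \<open>auto simp: t_def\<close>)
  also have "h (k + 1) = D / D2 * t powi k * X m"
  proof -
    have P: "t powi (k + 1) = t powi k * t" using nz by (intro power_int_add_1) (auto simp: t_def)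
    have E: "m - k * (a - c) + (a - c) * (k + 1) - (a - c) = m" by (simp add: algebra_simps)
    have "h (k + 1) = D1 / D2 * (t powi k * t) * X m" unfolding h_def P E by simp
    then show ?thesis unfolding t_def using fld2[OF nz(1)] by simp
  qed
  also have "h 0 = D1 / D2 * X (m - (k + 1) * (a - c))"
    unfolding h_def by (simp add: algebra_simps)
  finally show ?thesis unfolding t_def .
qed

theorem lemma5:
  fixes X :: "int \<Rightarrow> complex" and a b c d e k m :: int
  assumes "second_order_rec X"
  defines "\<Delta> \<equiv> X (d - a) * X (e - b) - X (e - a) * X (d - b)"
      and "\<Delta>1 \<equiv> X (d - c) * X (e - b) - X (e - c) * X (d - b)"
      and "\<Delta>2 \<equiv> X (d - a) * X (e - c) - X (e - a) * X (d - c)"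
  shows
   "((\<Delta>1 \<noteq> 0 \<and> \<Delta>2 \<noteq> 0 \<and> (k < 0 \<longrightarrow> \<Delta> \<noteq> 0)) \<longrightarrow>
      gsum k (\<lambda>r. (\<Delta> / \<Delta>1) powi r * X (m - k * (a - c) - b + c + (a - c) * r))
      = \<Delta> / \<Delta>2 * (\<Delta> / \<Delta>1) powi k * X m - \<Delta>1 / \<Delta>2 * X (m - (k + 1) * (a - c))) \<and>
   ((\<Delta>1 \<noteq> 0 \<and> \<Delta>2 \<noteq> 0 \<and> (k < 0 \<longrightarrow> \<Delta> \<noteq> 0)) \<longrightarrow>
      gsum k (\<lambda>r. (\<Delta> / \<Delta>2) powi r * X (m - k * (b - c) - a + c + (b - c) * r))
      = \<Delta> / \<Delta>1 * (\<Delta> / \<Delta>2) powi k * X m - \<Delta>2 / \<Delta>1 * X (m - (k + 1) * (b - c))) \<and>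
   ((\<Delta> \<noteq> 0 \<and> \<Delta>1 \<noteq> 0 \<and> (k < 0 \<longrightarrow> \<Delta>2 \<noteq> 0)) \<longrightarrow>
      gsum k (\<lambda>r. (- \<Delta>2 / \<Delta>1) powi r * X (m - k * (a - b) + b - c + (a - b) * r))
      = \<Delta>2 / \<Delta> * (- \<Delta>2 / \<Delta>1) powi k * X m + \<Delta>1 / \<Delta> * X (m - (k + 1) * (a - b)))"
proof -
  obtain p q where q: "q \<noteq> 0" and r: "\<And>m. X m = p * X (m - 1) + q * X (m - 2)"
    using assms(1) unfolding second_order_rec_def by blast
  have rel: "\<Delta> * X (n - c) = \<Delta>1 * X (n - a) + \<Delta>2 * X (n - b)" for n
  proof -
    have "D3 X a b c d e n = 0" by (rule D3_zero[OF q r])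
    moreover have "D3 X a b c d e n = \<Delta> * X (n - c) - \<Delta>2 * X (n - b) - \<Delta>1 * X (n - a)"
      unfolding D3_def \<Delta>_def \<Delta>1_def \<Delta>2_def by (rule det_expand)
    ultimately show ?thesis by (simp add: algebra_simps)
  qed
  have rel2: "\<Delta> * X (n - c) = \<Delta>2 * X (n - b) + \<Delta>1 * X (n - a)" for n
    using rel[of n] by (simp add: algebra_simps)
  have rel3: "(- \<Delta>2) * X (n - b) = \<Delta>1 * X (n - a) + (- \<Delta>) * X (n - c)" for n
    using rel[of n] by (simp add: algebra_simps)
  show ?thesis
  proof (intro conjI impI)
    assume "\<Delta>1 \<noteq> 0 \<and> \<Delta>2 \<noteq> 0 \<and> (k < 0 \<longrightarrow> \<Delta> \<noteq> 0)"
    then show "gsum k (\<lambda>r. (\<Delta> / \<Delta>1) powi r * X (m - k * (a - c) - b + c + (a - c) * r))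
      = \<Delta> / \<Delta>2 * (\<Delta> / \<Delta>1) powi k * X m - \<Delta>1 / \<Delta>2 * X (m - (k + 1) * (a - c))"
      using tel_main[OF rel] by blast
  next
    assume "\<Delta>1 \<noteq> 0 \<and> \<Delta>2 \<noteq> 0 \<and> (k < 0 \<longrightarrow> \<Delta> \<noteq> 0)"
    then show "gsum k (\<lambda>r. (\<Delta> / \<Delta>2) powi r * X (m - k * (b - c) - a + c + (b - c) * r))
      = \<Delta> / \<Delta>1 * (\<Delta> / \<Delta>2) powi k * X m - \<Delta>2 / \<Delta>1 * X (m - (k + 1) * (b - c))"
      using tel_main[OF rel2] by blast
  next
    assume H: "\<Delta> \<noteq> 0 \<and> \<Delta>1 \<noteq> 0 \<and> (k < 0 \<longrightarrow> \<Delta>2 \<noteq> 0)"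
    have A: "gsum k (\<lambda>r. (- \<Delta>2 / \<Delta>1) powi r * X (m - k * (a - b) - c + b + (a - b) * r))
      = (- \<Delta>2) / (- \<Delta>) * (- \<Delta>2 / \<Delta>1) powi k * X m - \<Delta>1 / (- \<Delta>) * X (m - (k + 1) * (a - b))"
      using tel_main[OF rel3, of k m] H by auto
    have B: "m - k * (a - b) + b - c + (a - b) * r = m - k * (a - b) - c + b + (a - b) * r" for r
      by simp
    have C: "(- \<Delta>2) / (- \<Delta>) * (- \<Delta>2 / \<Delta>1) powi k * X m - \<Delta>1 / (- \<Delta>) * X (m - (k + 1) * (a - b))
       = \<Delta>2 / \<Delta> * (- \<Delta>2 / \<Delta>1) powi k * X m + \<Delta>1 / \<Delta> * X (m - (k + 1) * (a - b))"
      by simp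
    show "gsum k (\<lambda>r. (- \<Delta>2 / \<Delta>1) powi r * X (m - k * (a - b) + b - c + (a - b) * r))
      = \<Delta>2 / \<Delta> * (- \<Delta>2 / \<Delta>1) powi k * X m + \<Delta>1 / \<Delta> * X (m - (k + 1) * (a - b))"
      unfolding B by (rule A[unfolded C])
  qed
qed

end
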